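(* Let $\rho$ be a finite intensity on $\Omega=B^d_+\times B^d_+$ with total mass $\Lambda>0$ such that $\mu=\rho/\Lambda$ is absolutely continuous with respect to Lebesgue measure on $\mathbb{R}^{2d}$ and neither the green nor the red marginal of $\mu$ is supported on a proper linear subspace of $\mathbb{R}^d$. Let $\phi:([0,1],\mathrm{Leb})\to(\Omega,\mu)$ be a measure-preserving Borel isomorphism (a bijection modulo null sets), and let $W(u,v)=K(\phi(u),\phi(v))$. Then $W$ is almost twin-free.
   Context: $B^d_+=\{x\in\mathbb{R}^d:x_k\ge0\ \forall k,\ \|x\|\le1\}$, $\Omega=B^d_+\times B^d_+$; $s=(\vec g_s,\vec r_s)\in\Omega$ and $K(s,t)=\vec g_s\cdot\vec r_t$. Green/red marginals are pushforwards of $\mu$ under $s\mapsto\vec g_s$, $s\mapsto\vec r_s$. For a kernel $W:[0,1]^2\to[0,1]$, two labels $u\neq u'$ are twins if $W(u,t)=W(u',t)$ for a.e. $t$ and $W(t,u)=W(t,u')$ for a.e. $t$. $W$ is almost twin-free if there is a Lebesgue-null set $N\subset[0,1]$ such that no two distinct $u,u'\in[0,1]\setminus N$ are twins. *)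

theory Defs
  imports "HOL-Analysis.Analysis"
begin

definition Bplus :: "(real ^ 'd) set" where
  "Bplus = {x. (\<forall>k. 0 \<le> x $ k) \<and> norm x \<le> 1}"

text \<open>Omega = B^d_+ x B^d_+; a point s is the pair (green vector, red vector).\<close>
definition Omega :: "((real ^ 'd) \<times> (real ^ 'd)) set" where
  "Omega = Bplus \<times> Bplus"

definition Kern :: "(real ^ 'd) \<times> (real ^ 'd) \<Rightarrow> (real ^ 'd) \<times> (real ^ 'd) \<Rightarrow> real" where
  "Kern s t = inner (fst s) (snd t)"

definition green_marginal :: "((real ^ 'd) \<times> (real ^ 'd)) measure \<Rightarrow> (real ^ 'd) measure" where
  "green_marginal M = distr M borel fst"

definition red_marginal :: "((real ^ 'd) \<times> (real ^ 'd)) measure \<Rightarrow> (real ^ 'd) measure" where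
  "red_marginal M = distr M borel snd"

definition supported_on :: "'a measure \<Rightarrow> 'a set \<Rightarrow> bool" where
  "supported_on M V \<longleftrightarrow> emeasure M (space M - V) = 0"

definition Leb01 :: "real measure" where
  "Leb01 = restrict_space lborel {0..1}"

definition mp_borel_iso :: "(real \<Rightarrow> 'b) \<Rightarrow> 'b set \<Rightarrow> 'b measure \<Rightarrow> bool" where
  "mp_borel_iso \<phi> Om M \<longleftrightarrow>
     \<phi> \<in> measurable Leb01 M \<and> distr Leb01 M \<phi> = M \<and> \<phi> ` {0..1} \<subseteq> Om \<and>
     (\<exists>N N' \<psi>. N \<in> null_sets Leb01 \<and> N' \<in> null_sets M \<and>
        bij_betw \<phi> ({0..1} - N) (Om - N') \<and>
        \<psi> \<in> measurable M lborel \<and>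
        (\<forall>x \<in> {0..1} - N. \<psi> (\<phi> x) = x) \<and> (\<forall>y \<in> Om - N'. \<phi> (\<psi> y) = y))"

definition twins :: "(real \<Rightarrow> real \<Rightarrow> real) \<Rightarrow> real \<Rightarrow> real \<Rightarrow> bool" where
  "twins W u u' \<longleftrightarrow> u \<noteq> u' \<and>
     (AE t in lebesgue. t \<in> {0..1} \<longrightarrow> W u t = W u' t) \<and>
     (AE t in lebesgue. t \<in> {0..1} \<longrightarrow> W t u = W t u')"

definition almost_twin_free :: "(real \<Rightarrow> real \<Rightarrow> real) \<Rightarrow> bool" where
  "almost_twin_free W \<longleftrightarrow>
     (\<exists>N. N \<subseteq> {0..1} \<and> N \<in> null_sets lebesgue \<and>
        (\<forall>u \<in> {0..1} - N. \<forall>u' \<in> {0..1} - N. u \<noteq> u' \<longrightarrow> \<not> twins W u u'))"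

end

theory Submission
  imports Defs
begin

lemma transfer_AE:
  fixes M :: "((real ^ 'd) \<times> (real ^ 'd)) measure"
    and \<phi> :: "real \<Rightarrow> (real ^ 'd) \<times> (real ^ 'd)"
  assumes sM: "sets M = sets borel"
    and meas: "\<phi> \<in> measurable Leb01 M"
    and dist: "distr Leb01 M \<phi> = M"
    and f: "f \<in> borel_measurable borel"
    and ae: "AE t in lebesgue. t \<in> {0..1} \<longrightarrow> f (\<phi> t) = (0::real)"
  shows "AE s in M. f s = 0"
proof -
  have 1: "AE t in lborel. t \<in> {0..1} \<longrightarrow> f (\<phi> t) = 0"
    using ae by (simp only: AE_completion_iff)
  have "{0..1::real} \<inter> space lborel \<in> sets lborel" by simp
  then have 2: "AE t in Leb01. f (\<phi> t) = 0"
    using 1 unfolding Leb01_def by (simp only: AE_restrict_space_iff)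
  have fM: "f \<in> borel_measurable M"
    using f by (subst measurable_cong_sets[OF sM refl])
  have "f -` {0} \<inter> space M \<in> sets M"
    using fM by (rule measurable_sets) simp
  moreover have "{x \<in> space M. f x = 0} = f -` {0} \<inter> space M" by blast
  ultimately have 3: "{x \<in> space M. f x = 0} \<in> sets M" by simp
  have "AE s in distr Leb01 M \<phi>. f s = 0"
    using 2 by (simp only: AE_distr_iff[OF meas 3])
  then show ?thesis using dist by (simp only:)
qed

lemma marg_supp:
  fixes M :: "((real ^ 'd) \<times> (real ^ 'd)) measure"
    and p :: "(real ^ 'd) \<times> (real ^ 'd) \<Rightarrow> real ^ 'd"
  assumes sM: "sets M = sets borel"
    and pc: "continuous_on UNIV p"
    and ae: "AE s in M. inner c (p s) = 0"
  shows "emeasure (distr M borel p) (space (distr M borel p) - {x. inner c x = 0}) = 0"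
proof -
  have pM: "p \<in> measurable M borel"
    by (subst measurable_cong_sets[OF sM refl]) (rule borel_measurable_continuous_onI[OF pc])
  have V: "{x. inner c x = 0} \<in> sets borel"
    by (rule borel_closed) (rule closed_hyperplane)
  have V': "{x \<in> space borel. x \<in> {x. inner c x = 0}} \<in> sets borel"
    using V by simp
  have "AE x in distr M borel p. x \<in> {x. inner c x = 0}"
    unfolding AE_distr_iff[OF pM V'] using ae by simp
  moreover have "{x \<in> space (distr M borel p). x \<notin> {x. inner c x = 0}} = space (distr M borel p) - {x. inner c x = 0}"
    by blast
  moreover have "space (distr M borel p) - {x. inner c x = 0} \<in> sets (distr M borel p)"
    using V by simp
  ultimately show ?thesis
    by (simp only: AE_iff_measurable[OF _ refl])
qed

lemma red_supp:
  fixes M :: "((real ^ 'd) \<times> (real ^ 'd)) measure"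
  assumes sM: "sets M = sets borel"
    and ae: "AE s in M. inner c (snd s) = 0"
  shows "supported_on (red_marginal M) {x. inner c x = 0}"
  unfolding supported_on_def red_marginal_def
  by (rule marg_supp[OF sM _ ae]) (intro continuous_intros)

lemma green_supp:
  fixes M :: "((real ^ 'd) \<times> (real ^ 'd)) measure"
  assumes sM: "sets M = sets borel"
    and ae: "AE s in M. inner (fst s) c = 0"
  shows "supported_on (green_marginal M) {x. inner c x = 0}"
proof -
  have ae': "AE s in M. inner c (fst s) = 0"
    using ae by (simp only: inner_commute)
  show ?thesis
  unfolding supported_on_def green_marginal_def
  by (rule marg_supp[OF sM _ ae']) (intro continuous_intros)
qed

lemma hyper_sub1:
  fixes c :: "real ^ 'd"
  assumes "c \<noteq> 0"
  shows "subspace {x. inner c x = 0}" "{x. inner c x = 0} \<noteq> UNIV"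
proof -
  show "subspace {x. inner c x = 0}" by (auto simp: subspace_def inner_add_right)
  have "c \<notin> {x. inner c x = 0}" using assms by simp
  then show "{x. inner c x = 0} \<noteq> UNIV" by blast
qed

theorem mainTheorem8:
  fixes \<rho> :: "((real ^ 'd) \<times> (real ^ 'd)) measure"
    and \<phi> :: "real \<Rightarrow> (real ^ 'd) \<times> (real ^ 'd)"
    and W :: "real \<Rightarrow> real \<Rightarrow> real"
  assumes fin: "finite_measure \<rho>"
    and sets_rho: "sets \<rho> = sets borel"
    and on_Omega: "emeasure \<rho> (space \<rho> - Omega) = 0"
    and mass_pos: "emeasure \<rho> (space \<rho>) > 0"
    and mu_def: "\<mu> = scale_measure (1 / emeasure \<rho> (space \<rho>)) \<rho>"
    and ac: "absolutely_continuous lborel \<mu>"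
    and green: "\<And>V. subspace V \<Longrightarrow> V \<noteq> UNIV \<Longrightarrow> \<not> supported_on (green_marginal \<mu>) V"
    and red: "\<And>V. subspace V \<Longrightarrow> V \<noteq> UNIV \<Longrightarrow> \<not> supported_on (red_marginal \<mu>) V"
    and iso: "mp_borel_iso \<phi> Omega \<mu>"
    and W_def: "\<And>u v. W u v = Kern (\<phi> u) (\<phi> v)"
  shows "almost_twin_free W"
proof -
  have sM: "sets \<mu> = sets borel" using mu_def sets_rho by simp
  have iso': "\<phi> \<in> measurable Leb01 \<mu> \<and> distr Leb01 \<mu> \<phi> = \<mu> \<and> \<phi> ` {0..1} \<subseteq> Omega \<and>
     (\<exists>N N' \<psi>. N \<in> null_sets Leb01 \<and> N' \<in> null_sets \<mu> \<and>
        bij_betw \<phi> ({0..1} - N) (Omega - N') \<and>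
        \<psi> \<in> measurable \<mu> lborel \<and>
        (\<forall>x \<in> {0..1} - N. \<psi> (\<phi> x) = x) \<and> (\<forall>y \<in> Omega - N'. \<phi> (\<psi> y) = y))"
    using iso by (simp only: mp_borel_iso_def)
  have meas: "\<phi> \<in> measurable Leb01 \<mu>" using iso' by (elim conjE)
  have dist: "distr Leb01 \<mu> \<phi> = \<mu>" using iso' by (elim conjE)
  from iso' obtain N N' where N: "N \<in> null_sets Leb01" and bij: "bij_betw \<phi> ({0..1} - N) (Omega - N')"
    by (elim conjE exE) (rule that, assumption, assumption)
  have "{0..1::real} \<in> sets lborel" by simp
  then have Nsub: "N \<subseteq> {0..1}" and Nnull: "N \<in> null_sets lborel"
    using N unfolding Leb01_def by (simp_all only: null_sets_restrict_space)
  have Nleb: "N \<in> null_sets lebesgue"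
    using Nnull by (rule null_sets_completionI)
  have inj: "inj_on \<phi> ({0..1} - N)" using bij by (simp add: bij_betw_def)
  have key: "\<phi> u = \<phi> u'" if tw: "twins W u u'" for u u'
  proof -
    define c where "c = fst (\<phi> u) - fst (\<phi> u')"
    define e where "e = snd (\<phi> u) - snd (\<phi> u')"
    have ae1: "AE t in lebesgue. t \<in> {0..1} \<longrightarrow> inner c (snd (\<phi> t)) = 0"
    proof -
      have "AE t in lebesgue. t \<in> {0..1} \<longrightarrow> W u t = W u' t"
        using tw unfolding twins_def by blast
      then show ?thesis
        by (rule eventually_mono) (simp add: W_def Kern_def c_def inner_diff_left)
    qed
    have ae2: "AE t in lebesgue. t \<in> {0..1} \<longrightarrow> inner (fst (\<phi> t)) e = 0"
    proof -
      have "AE t in lebesgue. t \<in> {0..1} \<longrightarrow> W t u = W t u'"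
        using tw unfolding twins_def by blast
      then show ?thesis
        by (rule eventually_mono) (simp add: W_def Kern_def e_def inner_diff_right)
    qed
    have "AE s in \<mu>. inner c (snd s) = 0"
      by (rule transfer_AE[where f="\<lambda>s. inner c (snd s)", OF sM meas dist _ ae1]) (intro borel_measurable_continuous_onI continuous_intros)
    then have "supported_on (red_marginal \<mu>) {x. inner c x = 0}"
      by (rule red_supp[OF sM])
    then have c0: "c = 0" using red[OF hyper_sub1] by metis
    have "AE s in \<mu>. inner (fst s) e = 0"
      by (rule transfer_AE[where f="\<lambda>s. inner (fst s) e", OF sM meas dist _ ae2]) (intro borel_measurable_continuous_onI continuous_intros)
    then have "supported_on (green_marginal \<mu>) {x. inner e x = 0}"
      by (rule green_supp[OF sM])
    then have e0: "e = 0" using green[OF hyper_sub1] by metis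
    have "fst (\<phi> u) = fst (\<phi> u')" using c0 unfolding c_def by simp
    moreover have "snd (\<phi> u) = snd (\<phi> u')" using e0 unfolding e_def by simp
    ultimately show ?thesis by (rule prod_eqI)
  qed
  show ?thesis
    unfolding almost_twin_free_def
  proof (intro exI[of _ N] conjI Nsub Nleb ballI impI)
    fix u u' assume u: "u \<in> {0..1} - N" and u': "u' \<in> {0..1} - N" and ne: "u \<noteq> u'"
    show "\<not> twins W u u'"
    proof
      assume "twins W u u'"
      then have "\<phi> u = \<phi> u'" by (rule key)
      with inj u u' ne show False unfolding inj_on_def by blast
    qed
  qed
qed

end
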